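(* Let $g:[a,b]\to\mathbb R$ be a derivator such that $g^C\equiv0$ and $D_g=\{x_n\}_{n\in\mathbb N}$ with $x_1=a$ and $x_n<x_{n+1}$ for every $n\in\mathbb N$. Then ${\rm P}_g$ is dense in $\mathrm{UC}_g([a,b])$ with respect to the supremum norm.
   Context: $\mathbb F\in\{\mathbb R,\mathbb C\}$. A derivator is a nondecreasing, left-continuous $g:[a,b]\to\mathbb R$; $\mu_g$ is its Lebesgue–Stieltjes measure ($\mu_g([c,d))=g(d)-g(c)$). For $x\in[a,b)$, $\Delta g(x)=g(x^+)-g(x)$; $D_g=\{x\in[a,b):\Delta g(x)>0\}$; $g^B(x)=\sum_{y\in[a,x)\cap D_g}\Delta g(y)$ and $g^C=g-g^B$. For $x_0\in[a,b]$, the $g$-monomials centered at $x_0$ are $g_{x_0,0}\equiv1$, $g_{x_0,n}(x)=n\int_{[x_0,x)}g_{x_0,n-1}\,d\mu_g$ for $x\ge x_0$, $g_{x_0,n}(x)=-n\int_{[x,x_0)}g_{x_0,n-1}\,d\mu_g$ for $x<x_0$. ${\rm P}_g$ is the space of finite $\mathbb F$-linear combinations of $g$-monomials. $\mathrm{UC}_g([a,b])$ is the Banach space (supremum norm) of uniformly $g$-continuous functions $f:[a,b]\to\mathbb F$: for every $\varepsilon>0$ there is $\delta>0$ with $|g(x)-g(y)|<\delta\Rightarrow|f(x)-f(y)|<\varepsilon$ for all $x,y\in[a,b]$. *)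

theory Defs
  imports "HOL-Analysis.Analysis"
begin

definition derivator :: "(real \<Rightarrow> real) \<Rightarrow> real \<Rightarrow> real \<Rightarrow> bool" where
  "derivator g a b \<longleftrightarrow> a < b \<and> mono_on {a..b} g \<and>
     (\<forall>x\<in>{a<..b}. (g \<longlongrightarrow> g x) (at_left x))"

definition gext :: "(real \<Rightarrow> real) \<Rightarrow> real \<Rightarrow> real \<Rightarrow> real \<Rightarrow> real" where
  "gext g a b x = g (max a (min b x))"

text \<open>Lebesgue-Stieltjes measure mu_g with mu_g([c,d)) = g(d) - g(c):
  the reflection of the (right-continuous) interval measure of x |-> - g(-x).\<close>
definition LS_measure :: "(real \<Rightarrow> real) \<Rightarrow> real \<Rightarrow> real \<Rightarrow> real measure" where
  "LS_measure g a b = distr (interval_measure (\<lambda>x. - gext g a b (- x))) borel uminus"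

definition gjump :: "(real \<Rightarrow> real) \<Rightarrow> real \<Rightarrow> real" where
  "gjump g x = Lim (at_right x) g - g x"

definition Dg :: "(real \<Rightarrow> real) \<Rightarrow> real \<Rightarrow> real \<Rightarrow> real set" where
  "Dg g a b = {x \<in> {a..<b}. gjump g x > 0}"

definition gB :: "(real \<Rightarrow> real) \<Rightarrow> real \<Rightarrow> real \<Rightarrow> real \<Rightarrow> real" where
  "gB g a b x = infsum (gjump g) ({a..<x} \<inter> Dg g a b)"

definition gC :: "(real \<Rightarrow> real) \<Rightarrow> real \<Rightarrow> real \<Rightarrow> real \<Rightarrow> real" where
  "gC g a b x = g x - gB g a b x"

primrec gmono :: "(real \<Rightarrow> real) \<Rightarrow> real \<Rightarrow> real \<Rightarrow> real \<Rightarrow> nat \<Rightarrow> real \<Rightarrow> real" where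
  "gmono g a b x0 0 = (\<lambda>x. 1)"
| "gmono g a b x0 (Suc n) = (\<lambda>x.
     if x0 \<le> x then real (Suc n) * (LINT y:{x0..<x}|LS_measure g a b. gmono g a b x0 n y)
     else - real (Suc n) * (LINT y:{x..<x0}|LS_measure g a b. gmono g a b x0 n y))"

definition Pg :: "(real \<Rightarrow> real) \<Rightarrow> real \<Rightarrow> real \<Rightarrow> (real \<Rightarrow> 'k::real_normed_field) set" where
  "Pg g a b = {p. \<exists>S c. finite S \<and> (\<forall>(x0, n)\<in>S. x0 \<in> {a..b}) \<and>
      (\<forall>x. p x = (\<Sum>(x0, n)\<in>S. c (x0, n) * of_real (gmono g a b x0 n x)))}"

definition UCg :: "(real \<Rightarrow> real) \<Rightarrow> real \<Rightarrow> real \<Rightarrow> (real \<Rightarrow> 'k::real_normed_vector) set" where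
  "UCg g a b = {f. \<forall>\<epsilon>>0. \<exists>\<delta>>0. \<forall>x\<in>{a..b}. \<forall>y\<in>{a..b}.
      \<bar>g x - g y\<bar> < \<delta> \<longrightarrow> norm (f x - f y) < \<epsilon>}"

definition Pg_dense :: "(real \<Rightarrow> real) \<Rightarrow> real \<Rightarrow> real \<Rightarrow> 'k::real_normed_field itself \<Rightarrow> bool" where
  "Pg_dense g a b _ \<longleftrightarrow> (\<forall>f::real \<Rightarrow> 'k. f \<in> UCg g a b \<longrightarrow>
      (\<forall>\<epsilon>>0. \<exists>p\<in>Pg g a b. (SUP x\<in>{a..b}. norm (f x - p x)) < \<epsilon>))"

end

theory Submission
  imports Defs "HOL-Probability.Distribution_Functions"
begin


fun Qd :: "(nat \<Rightarrow> real) \<Rightarrow> nat \<Rightarrow> nat \<Rightarrow> real" where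
  "Qd d 0 n = 1"
| "Qd d (Suc k) n = (\<Sum>j<n. d j * Qd d k j)"

lemma Qd_Suc_Suc: "Qd d (Suc k) (Suc n) = Qd d (Suc k) n + d n * Qd d k n"
  by simp

lemma Qd_Suc_gen: "Qd d k (Suc n) = Qd d k n + (if k = 0 then 0 else d n * Qd d (k - 1) n)"
  by (cases k) auto

lemma Qd_zero: "n < k \<Longrightarrow> Qd d k n = 0"
proof (induction k arbitrary: n)
  case 0 then show ?case by simp
next
  case (Suc k)
  have "Qd d k j = 0" if "j < n" for j using Suc that by simp
  then show ?case by simp
qed

lemma bern_aux:
  fixes t e :: real
  assumes "0 \<le> t" "0 \<le> e"
  shows "t ^ Suc k + real (Suc k) * e * t ^ k \<le> (t + e) ^ Suc k"
proof (induction k)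
  case 0 then show ?case by simp
next
  case (Suc k)
  have "t ^ Suc (Suc k) + real (Suc (Suc k)) * e * t ^ Suc k
      \<le> (t + e) * (t ^ Suc k + real (Suc k) * e * t ^ k)"
    using assms by (simp add: algebra_simps)
  also have "\<dots> \<le> (t + e) * (t + e) ^ Suc k"
    using Suc assms by (intro mult_left_mono) auto
  finally show ?case by simp
qed

locale dseq =
  fixes d :: "nat \<Rightarrow> real"
  assumes dpos: "\<And>n. d n > 0" and dsum: "summable d"
begin

lemma Qd_nonneg: "0 \<le> Qd d k n"
proof (induction k arbitrary: n)
  case 0 then show ?case by simp
next
  case (Suc k) then show ?case using dpos by (auto intro!: sum_nonneg simp: less_imp_le)
qed

lemma Qd_bound: "Qd d k n \<le> (\<Sum>j<n. d j) ^ k / fact k"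
proof (induction n arbitrary: k)
  case 0 then show ?case by (cases k) auto
next
  case (Suc n)
  show ?case
  proof (cases k)
    case 0 then show ?thesis by simp
  next
    case (Suc k')
    define t where "t = (\<Sum>j<n. d j)"
    have t0: "0 \<le> t" unfolding t_def using dpos by (auto intro!: sum_nonneg simp: less_imp_le)
    have e0: "0 \<le> d n" using dpos by (simp add: less_imp_le)
    have "Qd d k (Suc n) = Qd d (Suc k') n + d n * Qd d k' n" using Suc by simp
    also have "\<dots> \<le> t ^ Suc k' / fact (Suc k') + d n * (t ^ k' / fact k')"
      using Suc.IH[of "Suc k'"] Suc.IH[of k'] e0 unfolding t_def
      by (intro add_mono mult_left_mono) auto
    also have "\<dots> = (t ^ Suc k' + real (Suc k') * d n * t ^ k') / fact (Suc k')"
    proof -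
      have f: "(fact (Suc k') :: real) = real (Suc k') * fact k'" by simp
      have "(fact k' :: real) \<noteq> 0" by simp
      then show ?thesis unfolding f add_divide_distrib by (simp del: fact_Suc)
    qed
    also have "\<dots> \<le> (t + d n) ^ Suc k' / fact (Suc k')"
      using bern_aux[OF t0 e0, of k'] by (intro divide_right_mono) auto
    finally show ?thesis using Suc by (simp add: t_def add.commute)
  qed
qed

lemma psum_le: "(\<Sum>j<n. d j) \<le> suminf d"
  using dsum dpos by (intro sum_le_suminf) (auto simp: less_imp_le)

lemma Qd_bound2: "Qd d k n \<le> suminf d ^ k / fact k"
proof -
  have "(\<Sum>j<n. d j) ^ k \<le> suminf d ^ k"
    using psum_le dpos by (intro power_mono) (auto intro!: sum_nonneg simp: less_imp_le)
  then show ?thesis using Qd_bound[of k n] by (smt (verit) divide_right_mono fact_ge_zero)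
qed


definition Td :: "nat \<Rightarrow> real \<Rightarrow> nat \<Rightarrow> real" where
  "Td r l n = (\<Sum>k<Suc n. real (k choose r) * l ^ (k - r) * Qd d k n)"

lemma Td_ext: "Suc n \<le> N \<Longrightarrow> Td r l n = (\<Sum>k<N. real (k choose r) * l ^ (k - r) * Qd d k n)"
  unfolding Td_def
  by (rule sum.mono_neutral_left) (auto simp: Qd_zero)

lemma Td_0: "Td r l 0 = (if r = 0 then 1 else 0)"
  unfolding Td_def by simp

lemma coef_rec:
  "real (Suc j choose r) * l ^ (Suc j - r) =
     l * (real (j choose r) * l ^ (j - r)) + (if r = 0 then 0 else real (j choose (r - 1)) * l ^ (j - (r - 1)))"
proof (cases r)
  case 0 then show ?thesis by simp
next
  case (Suc r')
  consider "Suc r' \<le> j" | "j = r'" | "j < r'" by linarith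
  then show ?thesis
  proof cases
    case 1
    then have e: "j - r' = Suc (j - Suc r')" by simp
    show ?thesis using Suc 1 by (simp add: e algebra_simps)
  next
    case 2 then show ?thesis using Suc by simp
  next
    case 3 then show ?thesis using Suc by (simp add: binomial_eq_0)
  qed
qed

lemma Td_Suc: "Td r l (Suc n) = (1 + l * d n) * Td r l n + (if r = 0 then 0 else d n * Td (r - 1) l n)"
proof -
  let ?c = "\<lambda>k. real (k choose r) * l ^ (k - r)"
  have "Td r l (Suc n) = (\<Sum>k<Suc (Suc n). ?c k * Qd d k (Suc n))"
    unfolding Td_def by simp
  also have "\<dots> = (\<Sum>k<Suc (Suc n). ?c k * Qd d k n) +
      (\<Sum>k<Suc (Suc n). ?c k * (if k = 0 then 0 else d n * Qd d (k - 1) n))"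
    unfolding Qd_Suc_gen by (simp add: distrib_left sum.distrib)
  also have "(\<Sum>k<Suc (Suc n). ?c k * Qd d k n) = Td r l n"
    by (rule Td_ext[symmetric]) simp
  also have "(\<Sum>k<Suc (Suc n). ?c k * (if k = 0 then 0 else d n * Qd d (k - 1) n))
      = (\<Sum>j<Suc n. ?c (Suc j) * (d n * Qd d j n))"
    by (subst sum.lessThan_Suc_shift) simp
  also have "\<dots> = (\<Sum>j<Suc n. d n * (l * (real (j choose r) * l ^ (j - r)) * Qd d j n)
       + (if r = 0 then 0 else d n * (real (j choose (r - 1)) * l ^ (j - (r - 1)) * Qd d j n)))"
    by (intro sum.cong refl) (cases "r = 0"; simp add: coef_rec algebra_simps)
  also have "\<dots> = d n * l * Td r l n + (if r = 0 then 0 else d n * Td (r - 1) l n)"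
    unfolding Td_def by (auto simp: sum.distrib sum_distrib_left algebra_simps)
  finally show ?thesis by (simp add: algebra_simps)
qed

context
  fixes c :: real
  assumes cpos: "c > 0"
begin

definition zc :: "nat \<Rightarrow> nat" where "zc n = card {j. j < n \<and> d j = c}"

lemma zc_0: "zc 0 = 0" unfolding zc_def by simp

lemma zc_Suc: "zc (Suc n) = zc n + (if d n = c then 1 else 0)"
proof -
  show ?thesis
  proof (cases "d n = c")
    case True
    then have "{j. j < Suc n \<and> d j = c} = insert n {j. j < n \<and> d j = c}" by auto
    then show ?thesis unfolding zc_def using True by simp
  next
    case False
    then have "{j. j < Suc n \<and> d j = c} = {j. j < n \<and> d j = c}" using less_Suc_eq by auto
    then show ?thesis unfolding zc_def using False by simp
  qed
qed

lemma zc_mono: "m < n \<Longrightarrow> d m = c \<Longrightarrow> zc m < zc n"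
  unfolding zc_def
  by (rule psubset_card_mono) auto

lemma Td_vanish: "r < zc n \<Longrightarrow> Td r (- 1 / c) n = 0"
proof (induction n arbitrary: r)
  case 0 then show ?case by (simp add: zc_0)
next
  case (Suc n)
  show ?case
  proof (cases "d n = c")
    case True
    then have "1 + (- 1 / c) * d n = 0" using cpos by simp
    moreover have "r = 0 \<or> r - 1 < zc n" using Suc.prems True by (auto simp: zc_Suc)
    ultimately show ?thesis using Suc.IH by (auto simp: Td_Suc)
  next
    case False
    then have "r < zc n" using Suc.prems by (simp add: zc_Suc)
    then show ?thesis using Suc.IH[of r] Suc.IH[of "r - 1"] by (simp add: Td_Suc)
  qed
qed

lemma Td_nonvanish: "Td (zc n) (- 1 / c) n \<noteq> 0"
proof (induction n)
  case 0 then show ?case by (simp add: zc_0 Td_0)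
next
  case (Suc n)
  show ?case
  proof (cases "d n = c")
    case True
    then have "1 + (- 1 / c) * d n = 0" using cpos by simp
    then show ?thesis using Suc.IH True dpos[of n] by (simp add: Td_Suc zc_Suc)
  next
    case False
    then have ne: "1 + (- 1 / c) * d n \<noteq> 0" using cpos by (auto simp: field_simps)
    have "zc n = 0 \<or> Td (zc n - 1) (- 1 / c) n = 0" using Td_vanish[of "zc n - 1" n] by (cases "zc n") auto
    then show ?thesis using Suc.IH False ne by (auto simp: Td_Suc zc_Suc)
  qed
qed

end


definition apx :: "(nat \<Rightarrow> 'k::real_normed_field) \<Rightarrow> bool" where
  "apx v \<longleftrightarrow> (\<forall>\<epsilon>>0. \<exists>K c. \<forall>n. norm (v n - (\<Sum>k<K. c k * of_real (Qd d k n))) \<le> \<epsilon>)"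

lemma sum_if_less:
  assumes "K1 \<le> (K::nat)" shows "(\<Sum>k<K. (if k < K1 then f k else 0)) = (\<Sum>k<K1. f k)"
proof -
  have "{x \<in> {..<K}. x < K1} = {..<K1}" using assms by auto
  then show ?thesis by (metis sum.inter_filter finite_lessThan)
qed

lemma apx_add:
  fixes v w :: "nat \<Rightarrow> 'k::real_normed_field"
  assumes "apx v" "apx w"
  shows "apx (\<lambda>n. v n + w n)"
  unfolding apx_def
proof (intro allI impI)
  fix \<epsilon> :: real assume "\<epsilon> > 0"
  then have e2: "\<epsilon>/2 > 0" by simp
  obtain K1 c1 where 1: "\<And>n. norm (v n - (\<Sum>k<K1. c1 k * of_real (Qd d k n))) \<le> \<epsilon>/2"
    using assms(1) e2 unfolding apx_def by blast
  obtain K2 c2 where 2: "\<And>n. norm (w n - (\<Sum>k<K2. c2 k * of_real (Qd d k n))) \<le> \<epsilon>/2"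
    using assms(2) e2 unfolding apx_def by blast
  define K where "K = max K1 K2"
  define c where "c k = (if k < K1 then c1 k else 0) + (if k < K2 then c2 k else 0)" for k
  have s: "(\<Sum>k<K. c k * of_real (Qd d k n)) =
      (\<Sum>k<K1. c1 k * of_real (Qd d k n)) + (\<Sum>k<K2. c2 k * of_real (Qd d k n))" for n
  proof -
    have "(\<Sum>k<K. c k * of_real (Qd d k n)) = (\<Sum>k<K. (if k < K1 then c1 k * of_real (Qd d k n) else 0))
       + (\<Sum>k<K. (if k < K2 then c2 k * of_real (Qd d k n) else 0))"
    proof -
      have "c k * of_real (Qd d k n) = (if k < K1 then c1 k * of_real (Qd d k n) else 0)
         + (if k < K2 then c2 k * of_real (Qd d k n) else 0)" for k
        unfolding c_def by (simp add: distrib_right)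
      then show ?thesis by (simp add: sum.distrib)
    qed
    then show ?thesis by (simp add: sum_if_less K_def)
  qed
  show "\<exists>K c. \<forall>n. norm (v n + w n - (\<Sum>k<K. c k * of_real (Qd d k n))) \<le> \<epsilon>"
  proof (intro exI allI)
    fix n
    have "norm (v n + w n - (\<Sum>k<K. c k * of_real (Qd d k n)))
        = norm ((v n - (\<Sum>k<K1. c1 k * of_real (Qd d k n))) + (w n - (\<Sum>k<K2. c2 k * of_real (Qd d k n))))"
      unfolding s by (simp add: algebra_simps)
    also have "\<dots> \<le> \<epsilon>/2 + \<epsilon>/2" by (rule order_trans[OF norm_triangle_ineq add_mono[OF 1 2]])
    finally show "norm (v n + w n - (\<Sum>k<K. c k * of_real (Qd d k n))) \<le> \<epsilon>" by simp
  qed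
qed

lemma apx_scale:
  fixes v :: "nat \<Rightarrow> 'k::real_normed_field"
  assumes "apx v"
  shows "apx (\<lambda>n. \<alpha> * v n)"
proof (cases "\<alpha> = 0")
  case True then show ?thesis unfolding apx_def by (auto intro!: exI[of _ 0])
next
  case False
  show ?thesis unfolding apx_def
  proof (intro allI impI)
    fix \<epsilon> :: real assume "\<epsilon> > 0"
    then have "\<epsilon> / norm \<alpha> > 0" using False by simp
    then obtain K c where 1: "\<And>n. norm (v n - (\<Sum>k<K. c k * of_real (Qd d k n))) \<le> \<epsilon> / norm \<alpha>"
      using assms unfolding apx_def by blast
    show "\<exists>K c. \<forall>n. norm (\<alpha> * v n - (\<Sum>k<K. c k * of_real (Qd d k n))) \<le> \<epsilon>"
    proof (intro exI allI)
      fix n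
      have "norm (\<alpha> * v n - (\<Sum>k<K. (\<alpha> * c k) * of_real (Qd d k n)))
          = norm \<alpha> * norm (v n - (\<Sum>k<K. c k * of_real (Qd d k n)))"
      proof -
        have "\<alpha> * v n - (\<Sum>k<K. (\<alpha> * c k) * of_real (Qd d k n)) = \<alpha> * (v n - (\<Sum>k<K. c k * of_real (Qd d k n)))"
          by (simp add: sum_distrib_left right_diff_distrib mult.assoc)
        then show ?thesis by (simp add: norm_mult)
      qed
      also have "\<dots> \<le> norm \<alpha> * (\<epsilon> / norm \<alpha>)" by (rule mult_left_mono[OF 1]) simp
      also have "\<dots> = \<epsilon>" using False by simp
      finally show "norm (\<alpha> * v n - (\<Sum>k<K. (\<alpha> * c k) * of_real (Qd d k n))) \<le> \<epsilon>" .
    qed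
  qed
qed

lemma apx_zero: "apx (\<lambda>n. 0)"
  unfolding apx_def by (auto intro!: exI[of _ 0])

lemma apx_one: "apx (\<lambda>n. 1)"
  unfolding apx_def by (auto intro!: exI[of _ 1] exI[of _ "\<lambda>_. 1"])

lemma apx_sum:
  fixes w :: "nat \<Rightarrow> nat \<Rightarrow> 'k::real_normed_field"
  shows "(\<And>i. i < m \<Longrightarrow> apx (w i)) \<Longrightarrow> apx (\<lambda>n. \<Sum>i<m. w i n)"
proof (induction m)
  case 0 then show ?case by (simp add: apx_zero)
next
  case (Suc m)
  then show ?case by (simp add: apx_add)
qed

lemma apx_closed:
  fixes v :: "nat \<Rightarrow> 'k::real_normed_field"
  assumes "\<And>\<epsilon>. \<epsilon> > 0 \<Longrightarrow> \<exists>w. apx w \<and> (\<forall>n. norm (v n - w n) \<le> \<epsilon>)"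
  shows "apx v"
  unfolding apx_def
proof (intro allI impI)
  fix \<epsilon> :: real assume "\<epsilon> > 0"
  then have e2: "\<epsilon>/2 > 0" by simp
  obtain w where w: "apx w" "\<And>n. norm (v n - w n) \<le> \<epsilon>/2" using assms[OF e2] by blast
  obtain K c where 1: "\<And>n. norm (w n - (\<Sum>k<K. c k * of_real (Qd d k n))) \<le> \<epsilon>/2"
    using w(1) e2 unfolding apx_def by blast
  show "\<exists>K c. \<forall>n. norm (v n - (\<Sum>k<K. c k * of_real (Qd d k n))) \<le> \<epsilon>"
  proof (intro exI allI)
    fix n
    have "norm (v n - (\<Sum>k<K. c k * of_real (Qd d k n))) \<le> norm (v n - w n) + norm (w n - (\<Sum>k<K. c k * of_real (Qd d k n)))"
      using norm_triangle_ineq[of "v n - w n" "w n - (\<Sum>k<K. c k * of_real (Qd d k n))"] by simp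
    also have "\<dots> \<le> \<epsilon>/2 + \<epsilon>/2" using w(2) 1 by (rule add_mono)
    finally show "norm (v n - (\<Sum>k<K. c k * of_real (Qd d k n))) \<le> \<epsilon>" by simp
  qed
qed


lemma term_bound:
  "\<bar>real (k choose r) * l ^ (k - r) * Qd d k n\<bar> \<le> (2 * max 1 \<bar>l\<bar> * suminf d) ^ k / fact k"
proof -
  define M where "M = max 1 \<bar>l\<bar>"
  have M1: "1 \<le> M" unfolding M_def by simp
  have S0: "0 \<le> suminf d" using dsum dpos by (intro suminf_nonneg) (auto simp: less_imp_le)
  have a: "real (k choose r) \<le> 2 ^ k"
    using binomial_le_pow2[of k r] by (metis of_nat_le_iff of_nat_numeral of_nat_power)
  have b: "\<bar>l\<bar> ^ (k - r) \<le> M ^ k"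
  proof -
    have "\<bar>l\<bar> ^ (k - r) \<le> M ^ (k - r)" unfolding M_def by (intro power_mono) auto
    also have "\<dots> \<le> M ^ k" using M1 by (intro power_increasing) auto
    finally show ?thesis .
  qed
  have c: "\<bar>Qd d k n\<bar> \<le> suminf d ^ k / fact k" using Qd_nonneg Qd_bound2 by simp
  have "\<bar>real (k choose r) * l ^ (k - r) * Qd d k n\<bar> = real (k choose r) * \<bar>l\<bar> ^ (k - r) * \<bar>Qd d k n\<bar>"
    by (simp add: abs_mult power_abs)
  also have "\<dots> \<le> 2 ^ k * M ^ k * (suminf d ^ k / fact k)"
    using a b c by (intro mult_mono) (auto simp: M_def)
  also have "\<dots> = (2 * M * suminf d) ^ k / fact k" by (simp add: power_mult_distrib)
  finally show ?thesis unfolding M_def .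
qed

lemma apx_Td: "apx (\<lambda>n. (of_real (Td r l n) :: 'k::real_normed_field))"
  unfolding apx_def
proof (intro allI impI)
  fix \<epsilon> :: real assume e: "\<epsilon> > 0"
  define y where "y = 2 * max 1 \<bar>l\<bar> * suminf d"
  define b where "b k = y ^ k / fact k" for k
  have sb: "summable b"
    using summable_exp[of y] unfolding b_def by (simp add: divide_inverse mult.commute)
  have b0: "0 \<le> b k" for k
  proof -
    have "0 \<le> suminf d" using dsum dpos by (intro suminf_nonneg) (auto simp: less_imp_le)
    then show ?thesis unfolding b_def y_def by simp
  qed
  obtain N where N: "\<And>n. n \<ge> N \<Longrightarrow> norm (\<Sum>i. b (i + n)) < \<epsilon>"
    using suminf_exist_split[OF e sb] by blast
  define t where "t k n = real (k choose r) * l ^ (k - r) * Qd d k n" for k n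
  have tb: "\<bar>t k n\<bar> \<le> b k" for k n unfolding t_def b_def y_def by (rule term_bound)
  have "norm (of_real (Td r l n) - (\<Sum>k<N. of_real (real (k choose r) * l ^ (k - r)) * (of_real (Qd d k n) :: 'k))) \<le> \<epsilon>" for n
  proof -
    define M where "M = max N (Suc n)"
    have T: "Td r l n = (\<Sum>k<M. t k n)" unfolding t_def by (rule Td_ext) (simp add: M_def)
    have split: "(\<Sum>k<M. t k n) = (\<Sum>k<N. t k n) + (\<Sum>k\<in>{N..<M}. t k n)"
      by (metis M_def max.cobounded1 sum.atLeastLessThan_concat lessThan_atLeast0 zero_le)
    have "\<bar>\<Sum>k\<in>{N..<M}. t k n\<bar> \<le> (\<Sum>k\<in>{N..<M}. b k)"
      using tb by (intro order_trans[OF sum_abs] sum_mono) auto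
    also have "\<dots> = (\<Sum>i<M - N. b (i + N))"
    proof -
      have "(\<Sum>k\<in>{N..<M}. b k) = (\<Sum>i\<in>{0..<M - N}. b (i + N))"
        using sum.shift_bounds_nat_ivl[of b 0 N "M - N"] by (simp add: M_def)
      then show ?thesis by (simp add: atLeast0LessThan)
    qed
    also have "\<dots> \<le> (\<Sum>i. b (i + N))"
      using b0 sb by (intro sum_le_suminf) (auto simp: summable_iff_shift)
    also have "\<dots> < \<epsilon>" using N[of N] b0 by (simp add: suminf_nonneg sb summable_iff_shift)
    finally have lt: "\<bar>Td r l n - (\<Sum>k<N. t k n)\<bar> < \<epsilon>" using T split by simp
    have "(\<Sum>k<N. of_real (real (k choose r) * l ^ (k - r)) * (of_real (Qd d k n) :: 'k)) = of_real (\<Sum>k<N. t k n)"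
      unfolding t_def by (simp add: of_real_sum)
    then have "norm (of_real (Td r l n) - (\<Sum>k<N. of_real (real (k choose r) * l ^ (k - r)) * (of_real (Qd d k n) :: 'k)))
       = \<bar>Td r l n - (\<Sum>k<N. t k n)\<bar>"
      by (metis norm_of_real of_real_diff)
    then show "norm (of_real (Td r l n) - (\<Sum>k<N. of_real (real (k choose r) * l ^ (k - r)) * (of_real (Qd d k n) :: 'k))) \<le> \<epsilon>"
      using lt by simp
  qed
  then show "\<exists>K (c :: nat \<Rightarrow> 'k). \<forall>n. norm (of_real (Td r l n) - (\<Sum>k<K. c k * of_real (Qd d k n))) \<le> \<epsilon>"
    by (intro exI[where x=N] exI[where x="\<lambda>k. of_real (real (k choose r) * l ^ (k - r))"] allI) simp
qed

lemma apx_delta: "apx (\<lambda>n. if n = m then (1 :: 'k::real_normed_field) else 0)"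
proof (induction m rule: less_induct)
  case (less m)
  define c where "c = d m"
  have cpos: "c > 0" using dpos c_def by simp
  define v where "v n = (of_real (Td (zc c m) (- 1 / c) n) :: 'k)" for n
  have av: "apx v" unfolding v_def by (rule apx_Td)
  have vz: "v n = 0" if "m < n" for n
    unfolding v_def using Td_vanish[OF cpos, of "zc c m" n] zc_mono[OF cpos that] c_def by simp
  have vm: "v m \<noteq> 0"
    unfolding v_def using Td_nonvanish[OF cpos, of m] by simp
  define w where "w n = (1 / v m) * (v n + (- 1) * (\<Sum>i<m. v i * (if n = i then 1 else 0)))" for n
  have aw: "apx w"
    unfolding w_def
    by (intro apx_scale apx_add av apx_sum less.IH) auto
  have "w = (\<lambda>n. if n = m then 1 else 0)"
  proof
    fix n
    consider "n < m" | "n = m" | "m < n" by linarith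
    then show "w n = (if n = m then 1 else 0)"
    proof cases
      case 1
      have "(\<Sum>i<m. v i * (if n = i then 1 else 0)) = v n"
        using 1 by (simp add: sum.delta_remove if_distrib[of "\<lambda>x. v _ * x"] cong: if_cong)
      then show ?thesis using 1 by (simp add: w_def)
    next
      case 2 then show ?thesis using vm by (simp add: w_def)
    next
      case 3 then show ?thesis using vz[OF 3] by (simp add: w_def)
    qed
  qed
  then show ?case using aw by simp
qed

lemma apx_conv:
  fixes u :: "nat \<Rightarrow> 'k::real_normed_field"
  assumes "u \<longlonglongrightarrow> L"
  shows "apx u"
proof (rule apx_closed)
  fix \<epsilon> :: real assume "\<epsilon> > 0"
  then obtain N where N: "\<And>n. n \<ge> N \<Longrightarrow> norm (u n - L) < \<epsilon>"
    using LIMSEQ_D[OF assms] by blast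
  define w where "w n = L * 1 + (\<Sum>i<N. (u i - L) * (if n = i then 1 else 0))" for n
  have "apx w" unfolding w_def
    by (intro apx_add apx_scale apx_one apx_sum apx_delta)
  moreover have "norm (u n - w n) \<le> \<epsilon>" for n
  proof (cases "n < N")
    case True
    then have "(\<Sum>i<N. (u i - L) * (if n = i then 1 else 0)) = u n - L"
      by (simp add: if_distrib[of "\<lambda>x. _ * x"] cong: if_cong)
    then show ?thesis using \<open>\<epsilon> > 0\<close> by (simp add: w_def)
  next
    case False
    then have "(\<Sum>i<N. (u i - L) * (if n = i then 1 else 0)) = 0" by auto
    then show ?thesis using N[of n] False by (simp add: w_def)
  qed
  ultimately show "\<exists>w. apx w \<and> (\<forall>n. norm (u n - w n) \<le> \<epsilon>)" by blast
qed

end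



locale mainloc =
  fixes g :: "real \<Rightarrow> real" and a b :: real and xs :: "nat \<Rightarrow> real"
  assumes der: "derivator g a b"
    and gC0: "\<forall>x\<in>{a..b}. gC g a b x = 0"
    and Dg_eq: "Dg g a b = range xs"
    and x0: "xs 0 = a"
    and inc: "\<forall>n. xs n < xs (Suc n)"
begin

definition D :: "nat \<Rightarrow> real" where "D n = gjump g (xs n)"

lemma ab: "a < b" and gmon: "mono_on {a..b} g" and lc: "\<And>x. x \<in> {a<..b} \<Longrightarrow> (g \<longlongrightarrow> g x) (at_left x)"
  using der unfolding derivator_def by auto

lemma smono: "strict_mono xs"
  using inc by (simp add: strict_mono_Suc_iff)

lemma lt_iff: "xs i < xs j \<longleftrightarrow> i < j"
  using smono by (simp add: strict_mono_less)

lemma xs_in: "a \<le> xs n" "xs n < b"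
proof -
  have "xs n \<in> Dg g a b" using Dg_eq by simp
  then show "a \<le> xs n" "xs n < b" unfolding Dg_def by auto
qed

lemma Dpos: "D n > 0"
proof -
  have "xs n \<in> Dg g a b" using Dg_eq by simp
  then show ?thesis unfolding Dg_def D_def by auto
qed

lemma gform: "x \<in> {a..b} \<Longrightarrow> g x = infsum (gjump g) ({a..<x} \<inter> range xs)"
  using gC0 Dg_eq unfolding gC_def gB_def by auto

lemma gsame:
  assumes "x \<in> {a..b}" "y \<in> {a..b}" "\<And>j. xs j < x \<longleftrightarrow> xs j < y"
  shows "g x = g y"
proof -
  have "{a..<x} \<inter> range xs = {a..<y} \<inter> range xs"
    using assms(3) xs_in by auto
  then show ?thesis using gform assms by metis
qed

lemma g_xs: "g (xs n) = (\<Sum>j<n. D j)"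
proof -
  have xn: "xs n \<in> {a..b}" using xs_in[of n] by auto
  have "{a..<xs n} \<inter> range xs = xs ` {..<n}"
    using xs_in lt_iff by auto
  then have "g (xs n) = infsum (gjump g) (xs ` {..<n})" using gform[OF xn] by simp
  also have "\<dots> = sum (gjump g) (xs ` {..<n})" by simp
  also have "\<dots> = (\<Sum>j<n. D j)"
    using smono by (subst sum.reindex) (auto simp: D_def strict_mono_on_imp_inj_on inj_on_subset strict_mono_imp_inj_on)
  finally show ?thesis .
qed

lemma classify:
  assumes "x \<in> {a..b}"
  shows "(\<exists>n. \<forall>j. xs j < x \<longleftrightarrow> j < n) \<or> (\<forall>j. xs j < x)"
proof (cases "\<exists>n. x \<le> xs n")
  case True
  define n where "n = (LEAST n. x \<le> xs n)"
  have n1: "x \<le> xs n" unfolding n_def using True by (metis LeastI)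
  have "xs j < x \<longleftrightarrow> j < n" for j
  proof
    assume "xs j < x"
    show "j < n"
    proof (rule ccontr)
      assume "\<not> j < n"
      then have "xs n \<le> xs j" using lt_iff by (metis not_less)
      then show False using n1 \<open>xs j < x\<close> by simp
    qed
  next
    assume "j < n"
    then have "\<not> x \<le> xs j" unfolding n_def by (rule not_less_Least)
    then show "xs j < x" by simp
  qed
  then show ?thesis by blast
next
  case False
  then show ?thesis by (auto simp: not_le)
qed

definition L :: real where "L = (SUP n. xs n)"

lemma bddx: "bdd_above (range xs)"
  using xs_in by (auto intro!: bdd_aboveI[of _ b] less_imp_le)

lemma xs_L: "xs \<longlonglongrightarrow> L"
  unfolding L_def using bddx smono by (intro LIMSEQ_incseq_SUP) (auto simp: incseq_def strict_mono_less_eq)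

lemma xs_lt_L: "xs n < L"
proof -
  have "xs (Suc n) \<le> L" unfolding L_def by (rule cSUP_upper) (auto simp: bddx)
  then show ?thesis using inc by (meson order.strict_trans2)
qed

lemma L_in: "L \<in> {a<..b}"
proof -
  have "a < L" using xs_lt_L[of 0] x0 by simp
  moreover have "L \<le> b" unfolding L_def using xs_in by (intro cSUP_least) (auto simp: less_imp_le)
  ultimately show ?thesis by simp
qed

lemma gL: "g L = g b"
  using L_in ab xs_lt_L xs_in by (intro gsame) (auto intro: less_imp_le)

lemma D_sums: "D sums g b"
proof -
  have "filterlim xs (at_left L) sequentially"
    using xs_L xs_lt_L by (intro tendsto_imp_filterlim_at_left) auto
  then have "(\<lambda>n. g (xs n)) \<longlonglongrightarrow> g L"
    using lc[OF L_in] by (rule filterlim_compose[rotated])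
  then show ?thesis unfolding sums_def g_xs gL .
qed

lemma Dsum: "summable D" using D_sums by (rule sums_summable)
lemma suminfD: "suminf D = g b" using D_sums by (rule sums_unique[symmetric])

sublocale ds: dseq D
  using Dpos Dsum by unfold_locales auto

lemma ga: "g a = 0" using g_xs[of 0] x0 by simp

lemma gval:
  assumes "x \<in> {a..b}"
  shows "g x = (\<Sum>n. if xs n < x then D n else 0)"
  using classify[OF assms]
proof
  assume "\<exists>n. \<forall>j. xs j < x \<longleftrightarrow> j < n"
  then obtain n where n: "\<And>j. xs j < x \<longleftrightarrow> j < n" by blast
  have "g x = g (xs n)" using assms xs_in[of n] n lt_iff by (intro gsame) (auto intro: less_imp_le)
  also have "\<dots> = (\<Sum>j<n. D j)" by (rule g_xs)
  also have "\<dots> = (\<Sum>j. if j < n then D j else 0)"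
    by (subst suminf_finite[of "{..<n}"]) auto
  finally show ?thesis using n by simp
next
  assume all: "\<forall>j. xs j < x"
  have "g x = g b" using assms ab all xs_in by (intro gsame) (auto intro: less_imp_le)
  then show ?thesis using all suminfD by simp
qed

lemma gext_val: "gext g a b x = (\<Sum>n. if xs n < x then D n else 0)"
proof -
  consider "x < a" | "x \<in> {a..b}" | "b < x" by (cases "x < a"; cases "b < x") auto
  then show ?thesis
  proof cases
    case 1
    then have "max a (min b x) = a" using ab by simp
    moreover have "\<not> xs n < x" for n using 1 xs_in(1)[of n] by linarith
    ultimately show ?thesis unfolding gext_def using ga by simp
  next
    case 2 then show ?thesis unfolding gext_def using gval by simp
  next
    case 3
    then have "max a (min b x) = b" using ab by simp
    moreover have "xs n < x" for n using 3 xs_in(2)[of n] by linarith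
    ultimately show ?thesis unfolding gext_def using suminfD by simp
  qed
qed


lemma gext_mono: "x \<le> y \<Longrightarrow> gext g a b x \<le> gext g a b y"
  unfolding gext_def using ab by (intro mono_onD[OF gmon]) auto

lemma gext_lc: "(gext g a b \<longlongrightarrow> gext g a b x) (at_left x)"
proof -
  consider "x \<le> a" | "a < x \<and> x \<le> b" | "b < x" by linarith
  then show ?thesis
  proof cases
    case 1
    have "eventually (\<lambda>z. z \<in> {x - 1<..<x}) (at_left x)" by (rule eventually_at_left_real) simp
    then have "eventually (\<lambda>z. gext g a b z = gext g a b x) (at_left x)"
      by eventually_elim (use 1 ab in \<open>auto simp: gext_def\<close>)
    then show ?thesis by (rule tendsto_eventually)
  next
    case 2
    have "eventually (\<lambda>z. z \<in> {a<..<x}) (at_left x)" by (rule eventually_at_left_real) (use 2 in simp)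
    then have "eventually (\<lambda>z. g z = gext g a b z) (at_left x)"
      by eventually_elim (use 2 ab in \<open>auto simp: gext_def\<close>)
    moreover have "gext g a b x = g x" using 2 by (simp add: gext_def)
    ultimately show ?thesis using lc[of x] 2 by (auto intro: Lim_transform_eventually)
  next
    case 3
    have "eventually (\<lambda>z. z \<in> {b<..<x}) (at_left x)" by (rule eventually_at_left_real) (use 3 in simp)
    then have "eventually (\<lambda>z. gext g a b z = gext g a b x) (at_left x)"
      by eventually_elim (use 3 ab in \<open>auto simp: gext_def\<close>)
    then show ?thesis by (rule tendsto_eventually)
  qed
qed

definition Fp :: "real \<Rightarrow> real" where "Fp y = g b - gext g a b (- y)"

lemma Fp_mono: "x \<le> y \<Longrightarrow> Fp x \<le> Fp y"
  unfolding Fp_def using gext_mono[of "- y" "- x"] by simp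

lemma Fp_rc: "continuous (at_right y) Fp"
proof -
  have "filterlim (gext g a b) (nhds (gext g a b (- y))) (at_left (- y))" by (rule gext_lc)
  then have "((\<lambda>z. gext g a b (- z)) \<longlongrightarrow> gext g a b (- y)) (at_right y)"
    unfolding filterlim_at_left_to_right by simp
  then have "(Fp \<longlongrightarrow> Fp y) (at_right y)"
    unfolding Fp_def by (intro tendsto_diff tendsto_const)
  then show ?thesis by (simp add: continuous_within)
qed

lemma Fp_bot: "(Fp \<longlongrightarrow> 0) at_bot"
proof -
  have "eventually (\<lambda>y. Fp y = 0) at_bot"
    unfolding eventually_at_bot_linorder
    by (rule exI[of _ "- b - 1"]) (use ab in \<open>auto simp: Fp_def gext_def\<close>)
  then show ?thesis by (rule tendsto_eventually)
qed

lemma Fp_top: "(Fp \<longlongrightarrow> g b - g a) at_top"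
proof -
  have "eventually (\<lambda>y. Fp y = g b - g a) at_top"
    unfolding eventually_at_top_linorder
    by (rule exI[of _ "- a + 1"]) (use ab in \<open>auto simp: Fp_def gext_def\<close>)
  then show ?thesis by (rule tendsto_eventually)
qed

lemma gab: "g a \<le> g b" using ab by (intro mono_onD[OF gmon]) auto

lemma im_eq: "interval_measure (\<lambda>x. - gext g a b (- x)) = interval_measure Fp"
proof -
  have "(\<lambda>(u, v). ennreal (- gext g a b (- v) - - gext g a b (- u))) = (\<lambda>(u, v). ennreal (Fp v - Fp u))"
    by (auto simp: Fp_def fun_eq_iff)
  then show ?thesis unfolding interval_measure_def by simp
qed

definition dens :: "nat measure" where "dens = density (count_space UNIV) (\<lambda>n. ennreal (D n))"

lemma summ_if: "summable (\<lambda>n. if P n then D n else 0)"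
  by (rule summable_comparison_test[OF _ Dsum]) (auto intro!: exI[of _ 0] simp: less_imp_le[OF Dpos])

lemma emeasure_dens: "emeasure dens B = ennreal (\<Sum>n. if n \<in> B then D n else 0)"
proof -
  have "emeasure dens B = (\<integral>\<^sup>+ n. ennreal (D n) * indicator B n \<partial>count_space UNIV)"
    unfolding dens_def by (rule emeasure_density) auto
  also have "\<dots> = (\<Sum>n. ennreal (D n) * indicator B n)" by (rule nn_integral_count_space_nat)
  also have "\<dots> = (\<Sum>n. ennreal (if n \<in> B then D n else 0))"
    by (intro suminf_cong) (auto simp: indicator_def)
  also have "\<dots> = ennreal (\<Sum>n. if n \<in> B then D n else 0)"
    by (rule suminf_ennreal2) (auto simp: less_imp_le[OF Dpos] summ_if)
  finally show ?thesis .
qed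

definition nuR :: "real measure" where "nuR = distr dens borel (\<lambda>n. - xs n)"

lemma sets_dens: "sets dens = UNIV" unfolding dens_def by simp
lemma space_dens: "space dens = UNIV" unfolding dens_def by simp
lemma meas_dens: "f \<in> measurable dens borel"
  unfolding dens_def by (simp add: measurable_count_space_eq1)

lemma emeasure_nuR: "A \<in> sets borel \<Longrightarrow> emeasure nuR A = ennreal (\<Sum>n. if - xs n \<in> A then D n else 0)"
  unfolding nuR_def by (simp add: emeasure_distr meas_dens space_dens emeasure_dens)

lemma fin_nuR: "finite_borel_measure nuR"
proof -
  have "finite_measure nuR"
    by (rule finite_measureI) (simp add: nuR_def emeasure_distr meas_dens space_dens emeasure_dens)
  then show ?thesis unfolding finite_borel_measure_def finite_borel_measure_axioms_def
    by (simp add: nuR_def)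
qed

lemma cdf_nuR: "cdf nuR = Fp"
proof
  fix y
  have s0: "0 \<le> (\<Sum>n. if - xs n \<in> {..y} then D n else 0)"
    by (intro suminf_nonneg summ_if) (auto simp: less_imp_le[OF Dpos])
  have "cdf nuR y = (\<Sum>n. if - xs n \<in> {..y} then D n else 0)"
    unfolding cdf_def measure_def using s0 by (simp add: emeasure_nuR)
  also have "\<dots> = (\<Sum>n. D n - (if xs n < - y then D n else 0))"
    by (intro suminf_cong) auto
  also have "\<dots> = suminf D - (\<Sum>n. if xs n < - y then D n else 0)"
    by (rule suminf_diff[symmetric]) (auto simp: Dsum summ_if)
  also have "\<dots> = Fp y" unfolding Fp_def gext_val suminfD ..
  finally show "cdf nuR y = Fp y" .
qed

lemma im_nuR: "interval_measure Fp = nuR"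
proof (rule cdf_unique')
  show "finite_borel_measure (interval_measure Fp)"
    using Fp_mono Fp_rc Fp_bot Fp_top gab by (intro finite_borel_measure_interval_measure) auto
  show "finite_borel_measure nuR" by (rule fin_nuR)
  show "cdf (interval_measure Fp) = cdf nuR"
    unfolding cdf_nuR using Fp_mono Fp_rc Fp_bot by (intro cdf_interval_measure) auto
qed

lemma mu_eq: "LS_measure g a b = distr dens borel xs"
proof -
  have "LS_measure g a b = distr nuR borel uminus"
    unfolding LS_measure_def im_eq im_nuR ..
  also have "\<dots> = distr dens borel (uminus \<circ> (\<lambda>n. - xs n))"
    unfolding nuR_def by (rule distr_distr) (auto simp: meas_dens)
  also have "uminus \<circ> (\<lambda>n. - xs n) = xs" by (simp add: o_def)
  finally show ?thesis .
qed


lemma int_formula: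
  assumes hm: "h \<in> borel_measurable borel" and hb: "\<And>n. \<bar>h (xs n)\<bar> \<le> B" and A: "A \<in> sets borel"
  shows "(LINT y:A|LS_measure g a b. h y) = (\<Sum>n. D n * (indicator A (xs n) * h (xs n)))"
proof -
  have "(LINT y:A|LS_measure g a b. h y) = integral\<^sup>L (distr dens borel xs) (\<lambda>y. indicator A y *\<^sub>R h y)"
    unfolding set_lebesgue_integral_def mu_eq ..
  also have "\<dots> = integral\<^sup>L dens (\<lambda>n. indicator A (xs n) *\<^sub>R h (xs n))"
    by (rule integral_distr) (use hm A in \<open>auto simp: meas_dens\<close>)
  also have "\<dots> = integral\<^sup>L (count_space UNIV) (\<lambda>n. D n *\<^sub>R (indicator A (xs n) *\<^sub>R h (xs n)))"
    unfolding dens_def by (rule integral_density) (auto simp: less_imp_le[OF Dpos])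
  also have "\<dots> = (\<Sum>n. D n * (indicator A (xs n) * h (xs n)))"
  proof -
    have "summable (\<lambda>n. norm (D n *\<^sub>R (indicator A (xs n) *\<^sub>R h (xs n))))"
    proof (rule summable_comparison_test[OF _ summable_mult2[OF Dsum, of B]])
      show "\<exists>N. \<forall>n\<ge>N. norm (norm (D n *\<^sub>R (indicator A (xs n) *\<^sub>R h (xs n)))) \<le> D n * B"
      proof (intro exI allI impI)
        fix n
        have "\<bar>indicator A (xs n) * h (xs n)\<bar> \<le> B"
          using hb[of n] by (auto simp: indicator_def)
        then show "norm (norm (D n *\<^sub>R (indicator A (xs n) *\<^sub>R h (xs n)))) \<le> D n * B"
          using Dpos[of n] by (simp add: abs_mult mult_left_mono)
      qed
    qed
    then show ?thesis
      by (subst integral_count_space_nat) (auto simp: integrable_count_space_nat_iff)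
  qed
  finally show ?thesis .
qed

abbreviation m :: "nat \<Rightarrow> real \<Rightarrow> real" where "m k \<equiv> gmono g a b a k"

lemma summ_Q: "summable (\<lambda>n. D n * (if P n then fact k * Qd D k n else 0))"
proof (rule summable_comparison_test[OF _ summable_mult2[OF Dsum, of "suminf D ^ k"]])
  show "\<exists>N. \<forall>n\<ge>N. norm (D n * (if P n then fact k * Qd D k n else 0)) \<le> D n * suminf D ^ k"
  proof (intro exI allI impI)
    fix n
    have "fact k * Qd D k n \<le> suminf D ^ k"
      using ds.Qd_bound2[of k n] by (simp add: field_simps)
    moreover have "0 \<le> suminf D" using Dsum Dpos by (intro suminf_nonneg) (auto simp: less_imp_le)
    ultimately have "\<bar>if P n then fact k * Qd D k n else 0\<bar> \<le> suminf D ^ k"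
      using ds.Qd_nonneg[of k n] by auto
    then show "norm (D n * (if P n then fact k * Qd D k n else 0)) \<le> D n * suminf D ^ k"
      using Dpos[of n] by (simp add: abs_mult mult_left_mono)
  qed
qed

lemma m_step:
  assumes hm: "m k \<in> borel_measurable borel" and hv: "\<And>n. m k (xs n) = fact k * Qd D k n"
  shows "m (Suc k) = (\<lambda>x. if x < a then 0 else real (Suc k) * (\<Sum>n. D n * (if xs n < x then fact k * Qd D k n else 0)))"
proof
  fix x
  have hb: "\<bar>m k (xs n)\<bar> \<le> suminf D ^ k" for n
  proof -
    have "fact k * Qd D k n \<le> suminf D ^ k"
      using ds.Qd_bound2[of k n] by (simp add: field_simps)
    then show ?thesis using hv[of n] ds.Qd_nonneg[of k n] by simp
  qed
  show "m (Suc k) x = (if x < a then 0 else real (Suc k) * (\<Sum>n. D n * (if xs n < x then fact k * Qd D k n else 0)))"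
  proof (cases "x < a")
    case True
    have "(LINT y:{x..<a}|LS_measure g a b. m k y) = (\<Sum>n. D n * (indicator {x..<a} (xs n) * m k (xs n)))"
      by (rule int_formula[OF hm hb]) auto
    also have "\<dots> = 0"
    proof -
      have "\<not> xs n < a" for n using xs_in(1)[of n] by simp
      then show ?thesis by (simp add: indicator_def)
    qed
    finally show ?thesis using True by simp
  next
    case False
    have "(LINT y:{a..<x}|LS_measure g a b. m k y) = (\<Sum>n. D n * (indicator {a..<x} (xs n) * m k (xs n)))"
      by (rule int_formula[OF hm hb]) auto
    also have "\<dots> = (\<Sum>n. D n * (if xs n < x then fact k * Qd D k n else 0))"
      using xs_in by (intro suminf_cong) (simp add: indicator_def hv)
    finally show ?thesis using False by simp
  qed
qed

lemma m_ind: "m k \<in> borel_measurable borel \<and> (\<forall>n. m k (xs n) = fact k * Qd D k n)"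
proof (induction k)
  case 0 then show ?case by simp
next
  case (Suc k)
  then have hm: "m k \<in> borel_measurable borel" and hv: "\<And>n. m k (xs n) = fact k * Qd D k n" by auto
  define \<phi> where "\<phi> x = (\<Sum>n. D n * (if xs n < x then fact k * Qd D k n else 0))" for x
  have eq: "m (Suc k) = (\<lambda>x. if x < a then 0 else real (Suc k) * \<phi> x)"
    unfolding \<phi>_def by (rule m_step[OF hm hv])
  have nn: "0 \<le> D n * (fact k * Qd D k n)" for n
    using ds.Qd_nonneg[of k n] Dpos[of n] by simp
  have \<phi>0: "0 \<le> \<phi> x" for x
    unfolding \<phi>_def using nn by (intro suminf_nonneg) (auto simp: summ_Q)
  have \<phi>m: "\<phi> x \<le> \<phi> y" if "x \<le> y" for x y
    unfolding \<phi>_def using that nn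
    by (intro suminf_le) (auto simp: summ_Q)
  have "mono (m (Suc k))"
    unfolding eq mono_def using \<phi>0 \<phi>m by (auto intro!: mult_left_mono)
  then have "m (Suc k) \<in> borel_measurable borel" by (rule borel_measurable_mono)
  moreover have "m (Suc k) (xs n) = fact (Suc k) * Qd D (Suc k) n" for n
  proof -
    have "\<phi> (xs n) = (\<Sum>j<n. D j * (fact k * Qd D k j))"
      unfolding \<phi>_def lt_iff by (subst suminf_finite[of "{..<n}"]) auto
    then show ?thesis using xs_in[of n] unfolding eq
      by (simp add: sum_distrib_left algebra_simps)
  qed
  ultimately show ?case by blast
qed

lemma m_formula:
  "a \<le> x \<Longrightarrow> m (Suc k) x = real (Suc k) * (\<Sum>n. D n * (if xs n < x then fact k * Qd D k n else 0))"
  using m_step[of k] m_ind[of k] by simp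

lemma m_xs: "m k (xs n) = fact k * Qd D k n"
  using m_ind by blast

lemma m_val_n:
  assumes "a \<le> x" "\<And>j. xs j < x \<longleftrightarrow> j < n"
  shows "m k x = m k (xs n)"
proof (cases k)
  case 0 then show ?thesis by simp
next
  case (Suc k')
  have A: "m (Suc k') x = real (Suc k') * (\<Sum>j. D j * (if xs j < x then fact k' * Qd D k' j else 0))"
    by (rule m_formula[OF assms(1)])
  have B: "m (Suc k') (xs n) = real (Suc k') * (\<Sum>j. D j * (if xs j < xs n then fact k' * Qd D k' j else 0))"
    by (rule m_formula[OF xs_in(1)])
  have C: "(\<Sum>j. D j * (if xs j < x then fact k' * Qd D k' j else 0)) = (\<Sum>j. D j * (if xs j < xs n then fact k' * Qd D k' j else 0))"
    using assms(2) lt_iff by simp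
  show ?thesis by (simp only: Suc A B C)
qed

lemma m_val_all:
  assumes "a \<le> x" "\<And>j. xs j < x"
  shows "(\<lambda>n. m k (xs n)) \<longlonglongrightarrow> m k x"
proof (cases k)
  case 0 then show ?thesis by simp
next
  case (Suc k')
  have s: "summable (\<lambda>j. D j * (fact k' * Qd D k' j))" using summ_Q[of "\<lambda>_. True" k'] by simp
  have e: "m k (xs n) = real (Suc k') * (\<Sum>j<n. D j * (fact k' * Qd D k' j))" for n
  proof -
    have "m k (xs n) = real (Suc k') * (\<Sum>j. D j * (if xs j < xs n then fact k' * Qd D k' j else 0))"
      unfolding Suc by (rule m_formula[OF xs_in(1)])
    also have "(\<Sum>j. D j * (if xs j < xs n then fact k' * Qd D k' j else 0)) = (\<Sum>j<n. D j * (fact k' * Qd D k' j))"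
      unfolding lt_iff by (subst suminf_finite[of "{..<n}"]) auto
    finally show ?thesis .
  qed
  have "m k x = real (Suc k') * (\<Sum>j. D j * (if xs j < x then fact k' * Qd D k' j else 0))"
    unfolding Suc by (rule m_formula[OF assms(1)])
  then have "m k x = real (Suc k') * (\<Sum>j. D j * (fact k' * Qd D k' j))"
    using assms(2) by simp
  then show ?thesis unfolding e by (auto intro!: tendsto_mult_left summable_LIMSEQ s)
qed


lemma dense_gen: "Pg_dense g a b TYPE('k::real_normed_field)"
  unfolding Pg_dense_def
proof (intro allI impI)
  fix f :: "real \<Rightarrow> 'k" and \<epsilon> :: real
  assume fU: "f \<in> UCg g a b" and e: "\<epsilon> > 0"
  have uc: "\<And>e. e > 0 \<Longrightarrow> \<exists>\<delta>>0. \<forall>x\<in>{a..b}. \<forall>y\<in>{a..b}. \<bar>g x - g y\<bar> < \<delta> \<longrightarrow> norm (f x - f y) < e"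
    using fU unfolding UCg_def by blast
  have feq: "f x = f y" if "x \<in> {a..b}" "y \<in> {a..b}" "g x = g y" for x y
  proof (rule ccontr)
    assume "f x \<noteq> f y"
    define ee where "ee = norm (f x - f y)"
    have "ee > 0" using \<open>f x \<noteq> f y\<close> by (simp add: ee_def)
    from uc[OF this] obtain \<delta> where d: "\<delta> > 0" "\<forall>u\<in>{a..b}. \<forall>v\<in>{a..b}. \<bar>g u - g v\<bar> < \<delta> \<longrightarrow> norm (f u - f v) < ee"
      by blast
    have "\<bar>g x - g y\<bar> < \<delta>" using d(1) that(3) by simp
    then have "norm (f x - f y) < ee" using d(2) that(1,2) by blast
    then show False by (simp add: ee_def)
  qed
  have bI: "b \<in> {a..b}" using ab by simp
  have gconv: "(\<lambda>n. g (xs n)) \<longlonglongrightarrow> g b"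
    using D_sums unfolding sums_def g_xs .
  have fconv: "(\<lambda>n. f (xs n)) \<longlonglongrightarrow> f b"
  proof (rule tendstoI)
    fix e :: real assume "e > 0"
    from uc[OF this] obtain \<delta> where d: "\<delta> > 0" "\<forall>x\<in>{a..b}. \<forall>y\<in>{a..b}. \<bar>g x - g y\<bar> < \<delta> \<longrightarrow> norm (f x - f y) < e"
      by blast
    have "eventually (\<lambda>n. dist (g (xs n)) (g b) < \<delta>) sequentially"
      using tendstoD[OF gconv d(1)] .
    then show "eventually (\<lambda>n. dist (f (xs n)) (f b) < e) sequentially"
    proof eventually_elim
      case (elim n)
      have xnI: "xs n \<in> {a..b}" using xs_in[of n] by simp
      have "\<bar>g (xs n) - g b\<bar> < \<delta>" using elim by (simp add: dist_real_def)
      then have "norm (f (xs n) - f b) < e" using d(2) xnI bI by blast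
      then show ?case by (simp add: dist_norm)
    qed
  qed
  have e2: "\<epsilon> / 2 > 0" using e by simp
  obtain K and c :: "nat \<Rightarrow> 'k" where apx: "\<And>n. norm (f (xs n) - (\<Sum>k<K. c k * of_real (Qd D k n))) \<le> \<epsilon> / 2"
    using ds.apx_conv[OF fconv] e2 unfolding ds.apx_def by blast
  define p where "p x = (\<Sum>k<K. (c k / fact k) * of_real (m k x))" for x
  have pP: "p \<in> Pg g a b"
    unfolding Pg_def
  proof (intro CollectI exI conjI allI)
    show "finite ((\<lambda>k. (a, k)) ` {..<K})" by simp
    show "\<forall>(x0, n)\<in>(\<lambda>k. (a, k)) ` {..<K}. x0 \<in> {a..b}" using ab by auto
    fix x
    have "(\<Sum>(x0, n)\<in>(\<lambda>k. (a, k)) ` {..<K}. (\<lambda>(x0, k). c k / fact k) (x0, n) * of_real (gmono g a b x0 n x))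
        = (\<Sum>k<K. c k / fact k * of_real (gmono g a b a k x))"
      by (subst sum.reindex) (auto simp: inj_on_def)
    then show "p x = (\<Sum>(x0, n)\<in>(\<lambda>k. (a, k)) ` {..<K}. (\<lambda>(x0, k). c k / fact k) (x0, n) * of_real (gmono g a b x0 n x))"
      unfolding p_def by simp
  qed
  have pxs: "p (xs n) = (\<Sum>k<K. c k * of_real (Qd D k n))" for n
  proof -
    have "c k / fact k * of_real (m k (xs n)) = c k * of_real (Qd D k n)" for k
    proof -
      have "(fact k :: 'k) \<noteq> 0" by simp
      then show ?thesis unfolding m_xs by (simp add: of_real_mult)
    qed
    then show ?thesis unfolding p_def by simp
  qed
  have bound: "norm (f x - p x) \<le> \<epsilon> / 2" if xI: "x \<in> {a..b}" for x
    using classify[OF xI]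
  proof
    assume "\<exists>n. \<forall>j. xs j < x \<longleftrightarrow> j < n"
    then obtain n where n: "\<And>j. xs j < x \<longleftrightarrow> j < n" by blast
    have xnI: "xs n \<in> {a..b}" using xs_in[of n] by simp
    have "g x = g (xs n)" using xI xnI n lt_iff by (intro gsame) auto
    then have "f x = f (xs n)" using feq xI xnI by blast
    moreover have "p x = p (xs n)"
    proof -
      have mk: "m k x = m k (xs n)" for k using xI by (intro m_val_n n) auto
      show ?thesis unfolding p_def mk ..
    qed
    ultimately show ?thesis using apx[of n] pxs[of n] by simp
  next
    assume all: "\<forall>j. xs j < x"
    have "g x = g b" using xI bI all xs_in by (intro gsame) (auto intro: less_imp_le)
    then have fx: "f x = f b" using feq xI bI by blast
    have "(\<lambda>n. p (xs n)) \<longlonglongrightarrow> p x"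
      unfolding p_def using xI all
      by (intro tendsto_sum tendsto_mult_left tendsto_of_real m_val_all) auto
    then have "(\<lambda>n. norm (f (xs n) - p (xs n))) \<longlonglongrightarrow> norm (f x - p x)"
      using fconv fx by (intro tendsto_norm tendsto_diff) auto
    then show ?thesis
      using apx pxs by (intro tendsto_upperbound[of "\<lambda>n. norm (f (xs n) - p (xs n))"]) auto
  qed
  have "(SUP x\<in>{a..b}. norm (f x - p x)) \<le> \<epsilon> / 2"
    using ab bound by (intro cSUP_least) auto
  then have "(SUP x\<in>{a..b}. norm (f x - p x)) < \<epsilon>" using e by simp
  then show "\<exists>p\<in>Pg g a b. (SUP x\<in>{a..b}. norm (f x - p x)) < \<epsilon>" using pP by blast
qed

end

theorem mainTheorem19:
  fixes g :: "real \<Rightarrow> real" and a b :: real and xs :: "nat \<Rightarrow> real"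
  assumes "derivator g a b"
    and "\<forall>x\<in>{a..b}. gC g a b x = 0"
    and "Dg g a b = range xs"
    and "xs 0 = a"
    and "\<forall>n. xs n < xs (Suc n)"
  shows "Pg_dense g a b TYPE(real) \<and> Pg_dense g a b TYPE(complex)"
proof -
  interpret mainloc g a b xs using assms by unfold_locales
  show ?thesis using dense_gen dense_gen by blast
qed

end
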